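(* Let $g\in\mathcal{G}$ be slow-jumping and slow-dropping. There exists a sub-polynomial function $h$ such that for every $\lambda>0$, every stream $D\in\mathcal{D}(n,m)$ with frequencies $v_1,\dots,v_n$, and every $i\in[n]$: if $g(|v_i|)\ge \lambda\sum_{j=1}^n g(|v_j|)$, then $v_i^2\ge \frac{\lambda}{h(|v_i|)}\sum_{j:|v_j|<|v_i|} v_j^2$.
   Context: Streams: a stream of length $m$ with domain $[n]$ is a list $\langle (i_1,\delta_1),\dots,(i_m,\delta_m)\rangle$ with $i_j\in[n]$, $\delta_j\in\mathbb{Z}$; its frequencies are $v_i=\sum_{j:i_j=i}\delta_j$. $\mathcal{D}(n,m)$ is the set of turnstile streams with domain $[n]$ and length at most $m$ (there is $M$ with all prefix frequency vectors in $\{-M,\dots,M\}^n$). $\mathcal{G}=\{g:\mathbb{Z}_{\ge0}\to\mathbb{R}: g(0)=0,\ g(1)=1,\ g(x)>0\ \forall x>0\}$. A function $f:\mathbb{R}_{\ge0}\to\mathbb{R}_{\ge0}$ is sub-polynomial if for every $\alpha>0$, $\lim_{x\to\infty}x^\alpha f(x)=\infty$ and $\lim_{x\to\infty}x^{-\alpha}f(x)=0$. $g$ is slow-jumping if for every $\alpha>0$ there is $N>0$ such that for all positive integers $x<y$ with $y\ge N$, $g(y)\le \lfloor y/x\rfloor^{2+\alpha}x^\alpha g(x)$. $g$ is slow-dropping if for every $\alpha>0$ there is $N>0$ such that for all $x<y$ with $y\ge N$, $g(y)\ge g(x)/y^\alpha$. *)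

theory Defs
  imports "HOL-Analysis.Analysis"
begin

text \<open>A stream is a list of updates (i, delta); domain [n] = {1..n}.\<close>
type_synonym stream = "(nat \<times> int) list"

definition freq :: "stream \<Rightarrow> nat \<Rightarrow> int" where
  "freq s i = sum_list (map snd (filter (\<lambda>p. fst p = i) s))"

text \<open>D(n,m): turnstile streams over [n] of length at most m. The bound M on
prefix frequency vectors always exists for a finite list, so it imposes no
further restriction.\<close>
definition streams :: "nat \<Rightarrow> nat \<Rightarrow> stream set" where
  "streams n m = {s. length s \<le> m \<and> (\<forall>p\<in>set s. fst p \<in> {1..n})}"

definition classG :: "(nat \<Rightarrow> real) \<Rightarrow> bool" where
  "classG g \<longleftrightarrow> g 0 = 0 \<and> g 1 = 1 \<and> (\<forall>x>0. g x > 0)"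

definition sub_polynomial :: "(real \<Rightarrow> real) \<Rightarrow> bool" where
  "sub_polynomial f \<longleftrightarrow> (\<forall>x\<ge>0. f x \<ge> 0) \<and>
     (\<forall>\<alpha>>0. filterlim (\<lambda>x. x powr \<alpha> * f x) at_top at_top \<and>
             ((\<lambda>x. x powr (-\<alpha>) * f x) \<longlongrightarrow> 0) at_top)"

definition slow_jumping :: "(nat \<Rightarrow> real) \<Rightarrow> bool" where
  "slow_jumping g \<longleftrightarrow> (\<forall>\<alpha>>0. \<exists>N>0. \<forall>x y::nat. 0 < x \<and> x < y \<and> y \<ge> N \<longrightarrow>
      g y \<le> real (y div x) powr (2 + \<alpha>) * real x powr \<alpha> * g x)"

definition slow_dropping :: "(nat \<Rightarrow> real) \<Rightarrow> bool" where
  "slow_dropping g \<longleftrightarrow> (\<forall>\<alpha>>0. \<exists>N>0. \<forall>x y::nat. x < y \<and> y \<ge> N \<longrightarrow>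
      g y \<ge> g x / real y powr \<alpha>)"

end

theory Submission
  imports Defs "HOL-Real_Asymp.Real_Asymp"
begin

definition HH :: "(nat \<Rightarrow> real) \<Rightarrow> nat \<Rightarrow> real" where
  "HH g y = Max (insert 1 ((\<lambda>x. real x ^ 2 * g y / (real y ^ 2 * g x)) ` {1..<y}))"

lemma HH_ge1: "HH g y \<ge> 1"
  unfolding HH_def by (rule Max_ge) auto

lemma HH_ge: "0 < x \<Longrightarrow> x < y \<Longrightarrow> real x ^ 2 * g y / (real y ^ 2 * g x) \<le> HH g y"
  unfolding HH_def by (rule Max_ge) auto

lemma ratio_bound:
  fixes g :: "nat \<Rightarrow> real" and b :: real
  assumes cg: "classG g" and b: "b > 0" and x: "0 < x" "x < k"
    and J: "g k \<le> real (k div x) powr (2 + b) * real x powr b * g x"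
  shows "real x ^ 2 * g k / (real k ^ 2 * g x) \<le> real k powr b"
proof -
  have gx: "g x > 0" using cg x unfolding classG_def by auto
  have xr: "real x > 0" "real k > 0" using x by auto
  have "real (k div x) \<le> real k / real x"
    by (rule of_nat_div_le_of_nat)
  hence "real (k div x) powr (2 + b) \<le> (real k / real x) powr (2 + b)"
    using b by (intro powr_mono2) auto
  also have "(real k / real x) powr (2 + b) = (real k / real x)^2 * (real k powr b / real x powr b)"
    using xr by (simp add: powr_add powr_divide powr_numeral power_divide)
  finally have "g k \<le> (real k / real x)^2 * (real k powr b / real x powr b) * real x powr b * g x"
    using J gx by (meson mult_right_mono order_trans less_imp_le powr_ge_zero)
  also have "\<dots> = real k ^ 2 * real k powr b * g x / real x ^ 2"
    using xr by (simp add: field_simps power2_eq_square)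
  finally have "g k \<le> real k ^ 2 * real k powr b * g x / real x ^ 2" .
  hence "real x ^ 2 * g k \<le> real k powr b * (real k ^ 2 * g x)"
    using xr by (simp add: field_simps)
  thus ?thesis using xr gx by (simp add: divide_le_eq mult_pos_pos)
qed

lemma HH_bound:
  fixes g :: "nat \<Rightarrow> real"
  assumes cg: "classG g" and sj: "slow_jumping g" and b: "b > 0"
  shows "\<exists>N>0. \<forall>k\<ge>N. HH g k \<le> real k powr b"
proof -
  obtain N where N: "N > 0" "\<forall>x y::nat. 0 < x \<and> x < y \<and> y \<ge> N \<longrightarrow>
      g y \<le> real (y div x) powr (2 + b) * real x powr b * g x"
    using sj b unfolding slow_jumping_def by blast
  have "HH g k \<le> real k powr b" if k: "k \<ge> N" for k
  proof -
    have k1: "real k \<ge> 1" using k N by auto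
    show ?thesis unfolding HH_def
    proof (rule Max.boundedI)
      fix a assume "a \<in> insert 1 ((\<lambda>x. real x ^ 2 * g k / (real k ^ 2 * g x)) ` {1..<k})"
      then show "a \<le> real k powr b"
      proof
        assume "a = 1" thus ?thesis using k1 b by (simp add: ge_one_powr_ge_zero)
      next
        assume "a \<in> (\<lambda>x. real x ^ 2 * g k / (real k ^ 2 * g x)) ` {1..<k}"
        then obtain x where x: "x \<in> {1..<k}" "a = real x ^ 2 * g k / (real k ^ 2 * g x)" by auto
        show ?thesis unfolding x(2)
          using ratio_bound[OF cg b, of x k] N(2) x(1) k by auto
      qed
    qed auto
  qed
  thus ?thesis using N by blast
qed

theorem lemma17:
  fixes g :: "nat \<Rightarrow> real"
  assumes "classG g" and "slow_jumping g" and "slow_dropping g"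
  shows "\<exists>h. sub_polynomial h \<and> (\<forall>x>0. h x > 0) \<and>
    (\<forall>n m (lam::real) s i. lam > 0 \<longrightarrow> s \<in> streams n m \<longrightarrow> i \<in> {1..n} \<longrightarrow>
       g (nat \<bar>freq s i\<bar>) \<ge> lam * (\<Sum>j=1..n. g (nat \<bar>freq s j\<bar>)) \<longrightarrow>
       real_of_int ((freq s i)\<^sup>2) \<ge>
         lam / h (real_of_int \<bar>freq s i\<bar>) *
           (\<Sum>j\<in>{j\<in>{1..n}. \<bar>freq s j\<bar> < \<bar>freq s i\<bar>}. real_of_int ((freq s j)\<^sup>2)))"
proof -
  define h where "h = (\<lambda>x::real. HH g (nat \<lfloor>x\<rfloor>))"
  have h1: "h x \<ge> 1" for x unfolding h_def by (rule HH_ge1)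
  have hz: "h (real_of_int \<bar>z\<bar>) = HH g (nat \<bar>z\<bar>)" for z unfolding h_def by (simp only: of_int_abs[symmetric] floor_of_int)
  have gnn: "g x \<ge> 0" for x using assms(1) unfolding classG_def
    by (cases "x = 0") (auto intro: less_imp_le)
  have sp: "sub_polynomial h"
    unfolding sub_polynomial_def
  proof (intro conjI allI impI)
    fix x :: real show "0 \<le> h x" using h1[of x] by simp
  next
    fix a :: real assume a: "a > 0"
    have "filterlim (\<lambda>x::real. x powr a) at_top at_top" using a by real_asymp
    moreover have "eventually (\<lambda>x. x powr a \<le> x powr a * h x) at_top"
      using eventually_gt_at_top[of 0]
      by eventually_elim (use h1 in \<open>auto intro: mult_left_mono[of 1, simplified]\<close>)
    ultimately show "filterlim (\<lambda>x. x powr a * h x) at_top at_top"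
      by (rule filterlim_at_top_mono)
  next
    fix a :: real assume a: "a > 0"
    obtain N where N: "N > 0" "\<forall>k\<ge>N. HH g k \<le> real k powr (a/2)"
      using HH_bound[OF assms(1,2), of "a/2"] a by auto
    have lim: "((\<lambda>x::real. x powr (-a/2)) \<longlongrightarrow> 0) at_top" using a by real_asymp
    have e1: "eventually (\<lambda>x. x powr (-a) * h x \<le> x powr (-a/2)) at_top"
      using eventually_ge_at_top[of "real N"]
    proof eventually_elim
      case (elim x)
      have x0: "x > 0" using elim N by linarith
      have k: "nat \<lfloor>x\<rfloor> \<ge> N" using elim le_nat_floor by auto
      have "h x \<le> real (nat \<lfloor>x\<rfloor>) powr (a/2)" unfolding h_def using N k by auto
      also have "\<dots> \<le> x powr (a/2)"
        using a x0 by (intro powr_mono2) auto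
      finally have "x powr (-a) * h x \<le> x powr (-a) * x powr (a/2)"
        by (intro mult_left_mono) auto
      also have "\<dots> = x powr (-a/2)" by (simp add: powr_add[symmetric])
      finally show ?case .
    qed
    have e0: "eventually (\<lambda>x. 0 \<le> x powr (-a) * h x) at_top"
    proof (rule always_eventually, intro allI)
      fix x :: real show "0 \<le> x powr (-a) * h x" using h1[of x] by simp
    qed
    show "((\<lambda>x. x powr (-a) * h x) \<longlongrightarrow> 0) at_top"
      by (rule tendsto_sandwich[OF e0 e1 tendsto_const lim])
  qed
  have main: "real_of_int ((freq s i)\<^sup>2) \<ge>
         lam / h (real_of_int \<bar>freq s i\<bar>) *
           (\<Sum>j\<in>{j\<in>{1..n}. \<bar>freq s j\<bar> < \<bar>freq s i\<bar>}. real_of_int ((freq s j)\<^sup>2))"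
    if lam: "lam > 0" and G: "g (nat \<bar>freq s i\<bar>) \<ge> lam * (\<Sum>j=1..n. g (nat \<bar>freq s j\<bar>))"
    for n lam s i
  proof -
    define y where "y = nat \<bar>freq s i\<bar>"
    define S where "S = {j\<in>{1..n}. \<bar>freq s j\<bar> < \<bar>freq s i\<bar>}"
    define H where "H = HH g y"
    have H1: "H \<ge> 1" unfolding H_def by (rule HH_ge1)
    have yi: "real_of_int ((freq s i)\<^sup>2) = real y ^ 2" unfolding y_def by simp
    show ?thesis
    proof (cases "y = 0")
      case True
      hence "S = {}" unfolding S_def y_def by auto
      hence "(\<Sum>j\<in>S. real_of_int ((freq s j)\<^sup>2)) = 0" by simp
      thus ?thesis unfolding S_def by (simp only: mult_zero_right zero_le_power2 of_int_power)
    next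
      case False
      have gy: "g y > 0" using False assms(1) unfolding classG_def by auto
      have tm: "real_of_int ((freq s j)\<^sup>2) \<le> H * real y ^ 2 / g y * g (nat \<bar>freq s j\<bar>)"
        if j: "j \<in> S" for j
      proof -
        define x where "x = nat \<bar>freq s j\<bar>"
        have xy: "x < y" using j unfolding x_def y_def S_def by auto
        have xj: "real_of_int ((freq s j)\<^sup>2) = real x ^ 2" unfolding x_def by simp
        show ?thesis
        proof (cases "x = 0")
          case True thus ?thesis using xj x_def assms(1) by (simp add: classG_def)
        next
          case False
          have gx: "g x > 0" using False assms(1) unfolding classG_def by auto
          have "real x ^ 2 * g y / (real y ^ 2 * g x) \<le> H"
            unfolding H_def using HH_ge[of x y g] False xy by auto
          hence "real x ^ 2 * g y \<le> H * (real y ^ 2 * g x)"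
            using gx gy \<open>y \<noteq> 0\<close> by (simp add: divide_le_eq)
          hence "real x ^ 2 \<le> H * real y ^ 2 / g y * g x"
            using gy by (simp add: field_simps)
          thus ?thesis using xj x_def by simp
        qed
      qed
      have sub: "(\<Sum>j\<in>S. g (nat \<bar>freq s j\<bar>)) \<le> (\<Sum>j=1..n. g (nat \<bar>freq s j\<bar>))"
        unfolding S_def by (rule sum_mono2) (auto simp: gnn)
      have "lam * (\<Sum>j\<in>S. g (nat \<bar>freq s j\<bar>)) \<le> g y"
        using mult_left_mono[OF sub, of lam] lam G unfolding y_def by linarith
      hence sub2: "(\<Sum>j\<in>S. g (nat \<bar>freq s j\<bar>)) \<le> g y / lam"
        using lam by (simp add: field_simps)
      have c: "H * real y ^ 2 / g y \<ge> 0" using H1 gy by simp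
      have "(\<Sum>j\<in>S. real_of_int ((freq s j)\<^sup>2)) \<le> (\<Sum>j\<in>S. H * real y ^ 2 / g y * g (nat \<bar>freq s j\<bar>))"
        by (rule sum_mono) (rule tm)
      also have "\<dots> = H * real y ^ 2 / g y * (\<Sum>j\<in>S. g (nat \<bar>freq s j\<bar>))"
        by (simp add: sum_distrib_left)
      also have "\<dots> \<le> H * real y ^ 2 / g y * (g y / lam)"
        using sub2 c by (rule mult_left_mono)
      also have "\<dots> = H * real y ^ 2 / lam" using gy by simp
      finally have "(\<Sum>j\<in>S. real_of_int ((freq s j)\<^sup>2)) \<le> H * real y ^ 2 / lam" .
      hence "lam / H * (\<Sum>j\<in>S. real_of_int ((freq s j)\<^sup>2)) \<le> real y ^ 2"
        using lam H1 by (simp add: field_simps)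
      thus ?thesis unfolding S_def yi hz H_def y_def .
    qed
  qed
  show ?thesis
    apply (rule exI[of _ h])
    using sp h1 main by (auto intro: less_le_trans[OF zero_less_one])
qed

end
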